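(* (i) If there exists a function $m:\Gamma\to(0,\infty)$ such that $\beta_x m(x)\ge \lambda_x m(x')+\sum_{y\in N_x}\lambda_y m(y)$ for every $x\in\Gamma$, then $(Jv,v)\ge0$ for all $v\in\mathcal F(\Gamma)$. (ii) Conversely, if $(Jv,v)\ge 0$ for all $v\in\mathcal F(\Gamma)$, then there exists a function $m:\Gamma\to(0,\infty)$ such that $\beta_x m(x)= \lambda_x m(x')+\sum_{y\in N_x}\lambda_y m(y)$ for every $x\in\Gamma$.
   Context: Let $\Gamma$ be an infinite connected tree whose vertices are arranged in levels $\ell(x)\in\{0,1,2,\dots\}$: every vertex $x$ is adjacent to exactly one vertex $x'$ with $\ell(x')=\ell(x)+1$; for $\ell(x)\ge 1$ the set $N_x=\{y:\ y'=x\}$ of neighbours of $x$ on level $\ell(x)-1$ is finite and nonempty; $N_x=\emptyset$ if $\ell(x)=0$; there are no other edges. Fix $\lambda_x>0$, $\beta_x\in\mathbb R$. The Jacobi matrix $J$ acts on functions $v:\Gamma\to\mathbb C$ by $(Jv)(x)=\lambda_x v(x')+\beta_x v(x)+\sum_{y\in N_x}\lambda_y v(y)$. $\mathcal F(\Gamma)$ denotes the finitely supported functions on $\Gamma$, and $(u,v)=\sum_{x\in\Gamma}u(x)\overline{v(x)}$. *)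

theory Defs
  imports Complex_Main "HOL-Library.Complex_Order"
begin

text \<open>The tree Gamma is the whole type 'a. Each vertex x has the unique upper
neighbour p x (written x' in the paper), lev is the level function.
N_x = {y. p y = x}.\<close>

definition level_tree :: "('a \<Rightarrow> 'a) \<Rightarrow> ('a \<Rightarrow> nat) \<Rightarrow> bool" where
  "level_tree p lev \<longleftrightarrow>
     infinite (UNIV :: 'a set) \<and>
     (\<forall>x. lev (p x) = lev x + 1) \<and>
     (\<forall>x. lev x \<ge> 1 \<longrightarrow> finite {y. p y = x} \<and> {y. p y = x} \<noteq> {}) \<and>
     (\<forall>x. lev x = 0 \<longrightarrow> {y. p y = x} = {}) \<and>
     (\<forall>x y. \<exists>n k. (p ^^ n) x = (p ^^ k) y)"

definition jacobi :: "('a \<Rightarrow> 'a) \<Rightarrow> ('a \<Rightarrow> real) \<Rightarrow> ('a \<Rightarrow> real) \<Rightarrow> ('a \<Rightarrow> complex) \<Rightarrow> 'a \<Rightarrow> complex" where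
  "jacobi p lam beta v x =
     complex_of_real (lam x) * v (p x) + complex_of_real (beta x) * v x
     + (\<Sum>y\<in>{y. p y = x}. complex_of_real (lam y) * v y)"

text \<open>(u,w) = sum over x of u(x) * conj(w(x)); for w finitely supported the sum
is over the support of w.\<close>
definition fin_supp :: "('a \<Rightarrow> complex) \<Rightarrow> bool" where
  "fin_supp v \<longleftrightarrow> finite {x. v x \<noteq> 0}"

definition jform :: "('a \<Rightarrow> 'a) \<Rightarrow> ('a \<Rightarrow> real) \<Rightarrow> ('a \<Rightarrow> real) \<Rightarrow> ('a \<Rightarrow> complex) \<Rightarrow> complex" where
  "jform p lam beta v = (\<Sum>x\<in>{x. v x \<noteq> 0}. jacobi p lam beta v x * cnj (v x))"

end

theory Submission
  imports Defs
begin


primrec rr :: "('a\<Rightarrow>'a) \<Rightarrow> ('a\<Rightarrow>real) \<Rightarrow> ('a\<Rightarrow>real) \<Rightarrow> nat \<Rightarrow> 'a \<Rightarrow> real" where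
  "rr p lam beta 0 x = lam x / beta x"
| "rr p lam beta (Suc n) x = lam x / (beta x - (\<Sum>y\<in>{y. p y = x}. lam y * rr p lam beta n y))"

locale jt =
  fixes p :: "'a \<Rightarrow> 'a" and lev :: "'a \<Rightarrow> nat" and lam beta :: "'a \<Rightarrow> real"
  assumes tree: "level_tree p lev" and lam_pos: "\<forall>x. lam x > 0"
begin

lemma levp: "lev (p x) = lev x + 1"
  using tree unfolding level_tree_def by blast

lemma finN: "finite {y. p y = x}"
proof (cases "lev x = 0")
  case True then have "{y. p y = x} = {}" using tree unfolding level_tree_def by blast
  then show ?thesis by simp
next
  case False then show ?thesis using tree unfolding level_tree_def by auto
qed

lemma N0: "lev x = 0 \<Longrightarrow> {y. p y = x} = {}"
  using tree unfolding level_tree_def by blast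

lemma lev_funpow: "lev ((p^^k) z) = lev z + k"
  by (induction k) (auto simp: levp)

lemma connected: "\<exists>n k. (p ^^ n) x = (p ^^ k) y"
  using tree unfolding level_tree_def by blast

definition r where "r x = rr p lam beta (lev x) x"
definition d where "d x = beta x - (\<Sum>y\<in>{y. p y = x}. lam y * r y)"

lemma r_eq: "r x = lam x / d x"
proof (cases "lev x")
  case 0 then show ?thesis using N0[of x] by (simp add: r_def d_def)
next
  case (Suc n)
  have "(\<Sum>y\<in>{y. p y = x}. lam y * r y) = (\<Sum>y\<in>{y. p y = x}. lam y * rr p lam beta n y)"
  proof (rule sum.cong)
    fix y assume "y \<in> {y. p y = x}"
    then have "lev y = n" using levp[of y] Suc by simp
    then show "lam y * r y = lam y * rr p lam beta n y" by (simp add: r_def)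
  qed simp
  then show ?thesis using Suc by (simp add: r_def d_def)
qed

definition D where "D x = {z. \<exists>k. (p^^k) z = x}"

lemma D_rec: "D x = insert x (\<Union>y\<in>{y. p y = x}. D y)"
proof
  show "D x \<subseteq> insert x (\<Union>y\<in>{y. p y = x}. D y)"
  proof
    fix z assume "z \<in> D x"
    then obtain k where k: "(p^^k) z = x" by (auto simp: D_def)
    show "z \<in> insert x (\<Union>y\<in>{y. p y = x}. D y)"
    proof (cases k)
      case 0 then show ?thesis using k by simp
    next
      case (Suc j)
      then have "p ((p^^j) z) = x" using k by simp
      then show ?thesis by (auto simp: D_def)
    qed
  qed
next
  show "insert x (\<Union>y\<in>{y. p y = x}. D y) \<subseteq> D x"
  proof
    fix z assume "z \<in> insert x (\<Union>y\<in>{y. p y = x}. D y)"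
    then show "z \<in> D x"
    proof
      assume "z = x" then show ?thesis unfolding D_def by (auto intro!: exI[where x=0])
    next
      assume "z \<in> (\<Union>y\<in>{y. p y = x}. D y)"
      then obtain y j where "p y = x" "(p^^j) z = y" by (auto simp: D_def)
      then have "(p^^Suc j) z = x" by simp
      then show ?thesis unfolding D_def by blast
    qed
  qed
qed

lemma D_fin: "finite (D x)"
proof (induction "lev x" arbitrary: x rule: less_induct)
  case less
  have "\<And>y. p y = x \<Longrightarrow> finite (D y)"
    using less levp by force
  then show ?case by (subst D_rec) (auto simp: finN)
qed

lemma D_lev: "z \<in> D x \<Longrightarrow> lev z \<le> lev x \<and> (p^^(lev x - lev z)) z = x"
proof -
  assume "z \<in> D x"
  then obtain k where k: "(p^^k) z = x" by (auto simp: D_def)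
  then have "lev x = lev z + k" using lev_funpow by metis
  then show ?thesis using k by simp
qed

lemma self_D: "x \<in> D x"
  unfolding D_def by (auto intro!: exI[where x=0])

lemma D_p: "z \<in> D x \<Longrightarrow> z \<noteq> x \<Longrightarrow> p z \<in> D x"
proof -
  assume "z \<in> D x" "z \<noteq> x"
  then obtain k where k: "(p^^k) z = x" by (auto simp: D_def)
  with \<open>z \<noteq> x\<close> obtain j where "k = Suc j" by (cases k) auto
  then have "(p^^j) (p z) = x" using k by (simp add: funpow_Suc_right del: funpow.simps)
  then show ?thesis by (auto simp: D_def)
qed

lemma child_D: "p y = z \<Longrightarrow> z \<in> D x \<Longrightarrow> y \<in> D x"
proof -
  assume "p y = z" "z \<in> D x"
  then obtain k where k: "(p^^k) z = x" by (auto simp: D_def)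
  then have "(p^^Suc k) y = x" using \<open>p y = z\<close> by (simp add: funpow_Suc_right del: funpow.simps)
  then show ?thesis unfolding D_def by blast
qed

lemma pD: "p x \<notin> D x"
proof
  assume "p x \<in> D x" from D_lev[OF this] levp[of x] show False by simp
qed

lemma ppD: "p (p x) \<notin> D x"
proof
  assume "p (p x) \<in> D x" from D_lev[OF this] levp[of x] levp[of "p x"] show False by simp
qed


definition jr where "jr w z = lam z * w (p z) + beta z * w z + (\<Sum>y\<in>{y. p y = z}. lam y * w y)"

lemma jform_real:
  assumes S: "finite S" "\<And>z. z \<notin> S \<Longrightarrow> w z = 0"
  shows "fin_supp (\<lambda>z. complex_of_real (w z))"
    and "jform p lam beta (\<lambda>z. complex_of_real (w z)) = complex_of_real (\<Sum>z\<in>S. jr w z * w z)"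
proof -
  have sub: "{z. complex_of_real (w z) \<noteq> 0} \<subseteq> S" using S by auto
  then show "fin_supp (\<lambda>z. complex_of_real (w z))" unfolding fin_supp_def using S finite_subset by blast
  have "jform p lam beta (\<lambda>z. complex_of_real (w z)) =
        (\<Sum>z\<in>{z. complex_of_real (w z) \<noteq> 0}. complex_of_real (jr w z * w z))"
    unfolding jform_def jacobi_def jr_def by (simp add: of_real_sum)
  also have "\<dots> = (\<Sum>z\<in>S. complex_of_real (jr w z * w z))"
    by (rule sum.mono_neutral_left) (use S sub in auto)
  also have "\<dots> = complex_of_real (\<Sum>z\<in>S. jr w z * w z)" by (simp add: of_real_sum)
  finally show "jform p lam beta (\<lambda>z. complex_of_real (w z)) = complex_of_real (\<Sum>z\<in>S. jr w z * w z)" .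
qed

definition u where "u x z = (if z \<in> D x then (\<Prod>i<lev x - lev z. - r ((p^^i) z)) else 0)"

lemma u_x: "u x x = 1"
  using self_D by (simp add: u_def)

lemma u_rel: "z \<in> D x \<Longrightarrow> z \<noteq> x \<Longrightarrow> u x z = - r z * u x (p z)"
proof -
  assume zD: "z \<in> D x" and zx: "z \<noteq> x"
  define k where "k = lev x - lev z"
  have kz: "(p^^k) z = x" using D_lev[OF zD] by (simp add: k_def)
  then obtain j where j: "k = Suc j" using zx by (cases k) auto
  have lj: "lev x - lev (p z) = j" using j k_def levp[of z] by simp
  have pzD: "p z \<in> D x" by (rule D_p[OF zD zx])
  have "u x z = (\<Prod>i<Suc j. - r ((p^^i) z))" using zD j by (simp add: u_def k_def)
  also have "\<dots> = - r z * (\<Prod>i<j. - r ((p^^Suc i) z))" by (subst prod.lessThan_Suc_shift) simp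
  also have "\<dots> = - r z * (\<Prod>i<j. - r ((p^^i) (p z)))" by (simp add: funpow_Suc_right del: funpow.simps)
  also have "\<dots> = - r z * u x (p z)" using pzD lj by (simp add: u_def)
  finally show ?thesis .
qed

lemma u_out: "z \<notin> D x \<Longrightarrow> u x z = 0"
  by (simp add: u_def)

lemma quad_arg:
  fixes dd l b :: real
  assumes l: "l > 0" and H: "\<And>s. dd + 2*l*s + b * s^2 \<ge> 0"
  shows "dd > 0"
proof (rule ccontr)
  assume "\<not> dd > 0" then have d0: "dd \<le> 0" by simp
  define t where "t = \<bar>b\<bar> + 1"
  have t: "t > 0" by (simp add: t_def)
  have "dd + 2*l*(-l/t) + b * (-l/t)^2 \<ge> 0" by (rule H)
  then have "t^2 * (dd + 2*l*(-l/t) + b * (-l/t)^2) \<ge> 0" by simp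
  moreover have "t^2 * (dd + 2*l*(-l/t) + b * (-l/t)^2) = dd * t^2 - 2*(l^2*t) + b*l^2"
    using t by (simp add: field_simps power2_eq_square)
  ultimately have A: "dd * t^2 - 2*(l^2*t) + b*l^2 \<ge> 0" by simp
  have "b * l^2 \<le> (t - 1) * l^2" by (rule mult_right_mono) (auto simp: t_def)
  then have B: "b * l^2 \<le> l^2*t - l^2" by (simp add: algebra_simps)
  have C: "dd * t^2 \<le> 0" using d0 by (simp add: mult_nonpos_nonneg)
  have E: "l^2 * t > 0" using l t by simp
  have "l^2 > 0" using l by simp
  with A B C E show False by linarith
qed

end

locale jt_pos = jt +
  assumes pos: "\<forall>v. fin_supp v \<longrightarrow> jform p lam beta v \<ge> 0"
begin

lemma d_pos: "d x > 0"
proof (induction "lev x" arbitrary: x rule: less_induct)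
  case less
  have IH: "d z > 0" if "z \<in> D x" "z \<noteq> x" for z
  proof -
    have "lev z < lev x" using D_lev[OF that(1)] that(2) by (cases "lev x = lev z") auto
    then show ?thesis using less by blast
  qed
  have key: "d x + 2*lam x*s + beta (p x) * s^2 \<ge> 0" for s
  proof -
    define w where "w z = u x z + (if z = p x then s else 0)" for z
    define S where "S = insert (p x) (D x)"
    have finS: "finite S" using D_fin by (simp add: S_def)
    have w_out: "w z = 0" if "z \<notin> S" for z using that by (simp add: w_def S_def u_out)
    have w_px: "w (p x) = s" using pD by (simp add: w_def u_out)
    have xpx: "x \<noteq> p x" using levp[of x] by auto
    have w_x: "w x = 1" using xpx by (simp add: w_def u_x)
    have w_rel: "w z = - r z * w (p z)" if "z \<in> D x" "z \<noteq> x" for z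
    proof -
      have "z \<noteq> p x" "p z \<noteq> p x" using that pD[of x] D_p[OF that] by auto
      then show ?thesis using u_rel[OF that] by (simp add: w_def)
    qed
    have w_ppx: "w (p (p x)) = 0"
    proof -
      have "p (p x) \<noteq> p x" using levp[of "p x"] by auto
      then show ?thesis using ppD by (simp add: w_def u_out)
    qed
    have jr_in: "jr w z = 0" if zD: "z \<in> D x" and zx: "z \<noteq> x" for z
    proof -
      have ch: "w y = - r y * w z" if "p y = z" for y
      proof -
        have yD: "y \<in> D x" using child_D that zD by blast
        have "y \<noteq> x" using that zD pD by auto
        then show ?thesis using w_rel[OF yD] that by simp
      qed
      have "(\<Sum>y\<in>{y. p y = z}. lam y * w y) = - w z * (\<Sum>y\<in>{y. p y = z}. lam y * r y)"
        by (simp add: sum_distrib_left ch algebra_simps)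
      then have "jr w z = lam z * w (p z) + w z * d z" by (simp add: jr_def d_def algebra_simps)
      also have "\<dots> = 0" using w_rel[OF zD zx] r_eq[of z] IH[OF zD zx] by (simp add: field_simps)
      finally show ?thesis .
    qed
    have jr_x: "jr w x = lam x * s + d x"
    proof -
      have ch: "w y = - r y" if "p y = x" for y
      proof -
        have yD: "y \<in> D x" using child_D that self_D by blast
        have "y \<noteq> x" using that xpx by auto
        then show ?thesis using w_rel[OF yD] that w_x by simp
      qed
      have "(\<Sum>y\<in>{y. p y = x}. lam y * w y) = - (\<Sum>y\<in>{y. p y = x}. lam y * r y)"
        by (simp add: ch sum_negf)
      then show ?thesis by (simp add: jr_def d_def w_px w_x)
    qed
    have jr_px: "jr w (p x) = beta (p x) * s + lam x"
    proof -
      have "(\<Sum>y\<in>{y. p y = p x}. lam y * w y) = (\<Sum>y\<in>{y. p y = p x}. if y = x then lam x else 0)"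
      proof (rule sum.cong)
        fix y assume "y \<in> {y. p y = p x}"
        then have py: "p y = p x" by simp
        show "lam y * w y = (if y = x then lam x else 0)"
        proof (cases "y = x")
          case True then show ?thesis using w_x by simp
        next
          case False
          have "y \<notin> D x" using D_p[of y x] False py pD by auto
          moreover have "y \<noteq> p x" using py levp[of y] levp[of "p x"] by auto
          ultimately show ?thesis using False by (simp add: w_def u_out)
        qed
      qed simp
      also have "\<dots> = lam x" by (simp add: sum.delta[OF finN])
      finally show ?thesis by (simp add: jr_def w_ppx w_px)
    qed
    have "(\<Sum>z\<in>S. jr w z * w z) = jr w (p x) * w (p x) + (\<Sum>z\<in>D x. jr w z * w z)"
      using pD D_fin by (simp add: S_def)
    also have "(\<Sum>z\<in>D x. jr w z * w z) = jr w x * w x + (\<Sum>z\<in>D x - {x}. jr w z * w z)"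
      using sum.remove[OF D_fin self_D, of "\<lambda>z. jr w z * w z"] by simp
    also have "(\<Sum>z\<in>D x - {x}. jr w z * w z) = 0" using jr_in by simp
    finally have "(\<Sum>z\<in>S. jr w z * w z) = d x + 2*lam x*s + beta (p x) * s^2"
      by (simp add: jr_px jr_x w_px w_x algebra_simps power2_eq_square)
    moreover have "jform p lam beta (\<lambda>z. complex_of_real (w z)) \<ge> 0"
      using pos jform_real(1)[of S w] finS w_out by blast
    ultimately show ?thesis using jform_real(2)[of S w] finS w_out by (simp add: less_eq_complex_def)
  qed
  show ?case by (rule quad_arg[OF _ key]) (use lam_pos in auto)
qed


lemma r_pos: "r x > 0"
  using r_eq[of x] d_pos[of x] lam_pos by simp

definition P where "P z n = (\<Prod>i<n. r ((p^^i) z))"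

lemma P_pos: "P z n > 0"
  unfolding P_def by (rule prod_pos) (simp add: r_pos)

lemma P_add: "P z (n + j) = P z n * P ((p^^n) z) j"
proof (induction j)
  case 0 then show ?case by (simp add: P_def)
next
  case (Suc j)
  have "P z (n + Suc j) = P z (n + j) * r ((p^^(n+j)) z)" by (simp add: P_def)
  moreover have e: "(p^^(n+j)) z = (p^^j) ((p^^n) z)" by (simp add: funpow_add add.commute)
  ultimately show ?case using Suc by (simp add: P_def)
qed

lemma wd_le:
  assumes "(p^^n) z = (p^^k) q" "(p^^n') z = (p^^k') q" "n \<le> n'"
  shows "P z n / P q k = P z n' / P q k'"
proof -
  have "lev z + n = lev q + k" "lev z + n' = lev q + k'"
    using assms(1,2) lev_funpow by metis+
  moreover define j where "j = n' - n"
  ultimately have j: "n' = n + j" "k' = k + j" using assms(3) by auto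
  have "P z n' = P z n * P ((p^^n) z) j" unfolding j(1) by (rule P_add)
  moreover have "P q k' = P q k * P ((p^^n) z) j" unfolding j(2) assms(1) by (rule P_add)
  ultimately show ?thesis using P_pos[of "(p^^n) z" j] by simp
qed

lemma wd:
  assumes "(p^^n) z = (p^^k) q" "(p^^n') z = (p^^k') q"
  shows "P z n / P q k = P z n' / P q k'"
  using wd_le[OF assms] wd_le[OF assms(2,1)] by (cases "n \<le> n'") auto

definition o0 :: 'a where "o0 = undefined"
definition m where "m z = (let pr = (SOME pr. (p^^fst pr) z = (p^^snd pr) o0) in P z (fst pr) / P o0 (snd pr))"

lemma m_eq: "(p^^n) z = (p^^k) o0 \<Longrightarrow> m z = P z n / P o0 k"
proof -
  assume h: "(p^^n) z = (p^^k) o0"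
  have "\<exists>pr. (p^^fst pr) z = (p^^snd pr) o0" using h by (metis fst_conv snd_conv)
  then have "(p^^fst (SOME pr. (p^^fst pr) z = (p^^snd pr) o0)) z = (p^^snd (SOME pr. (p^^fst pr) z = (p^^snd pr) o0)) o0"
    by (rule someI_ex)
  then show ?thesis unfolding m_def Let_def using wd[OF _ h] by blast
qed

lemma m_pos: "m z > 0"
proof -
  obtain n k where "(p^^n) z = (p^^k) o0" using connected by blast
  then show ?thesis using m_eq P_pos by (simp add: divide_pos_pos)
qed

lemma m_rel: "m z = r z * m (p z)"
proof -
  obtain n k where h: "(p^^n) (p z) = (p^^k) o0" using connected by blast
  then have h2: "(p^^Suc n) z = (p^^k) o0" by (simp add: funpow_Suc_right del: funpow.simps)
  have "P z (Suc n) = r z * P (p z) n"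
    unfolding P_def by (subst prod.lessThan_Suc_shift) (simp add: funpow_Suc_right del: funpow.simps)
  then show ?thesis using m_eq[OF h] m_eq[OF h2] by simp
qed

lemma m_eqn: "beta x * m x = lam x * m (p x) + (\<Sum>y\<in>{y. p y = x}. lam y * m y)"
proof -
  have "(\<Sum>y\<in>{y. p y = x}. lam y * m y) = m x * (\<Sum>y\<in>{y. p y = x}. lam y * r y)"
    unfolding sum_distrib_left
  proof (rule sum.cong)
    fix y assume "y \<in> {y. p y = x}"
    then show "lam y * m y = m x * (lam y * r y)" using m_rel[of y] by simp
  qed simp
  moreover have "lam x * m (p x) = m x * d x"
    using m_rel[of x] r_eq[of x] d_pos[of x] lam_pos by (simp add: field_simps)
  ultimately show ?thesis by (simp add: d_def algebra_simps)
qed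

end



lemma exch:
  fixes f :: "'a \<Rightarrow> 'a \<Rightarrow> 'b::comm_monoid_add"
  assumes fin: "finite S" and z: "\<And>y. y \<in> S \<Longrightarrow> p y \<notin> S \<Longrightarrow> f y (p y) = 0"
  shows "(\<Sum>y\<in>S. f y (p y)) = (\<Sum>x\<in>S. \<Sum>y\<in>{y\<in>S. p y = x}. f y x)"
proof -
  have "(\<Sum>x\<in>S. \<Sum>y\<in>{y\<in>S. p y = x}. f y x) = (\<Sum>x\<in>S. \<Sum>y\<in>S. if p y = x then f y x else 0)"
    using fin by (simp add: sum.inter_filter)
  also have "\<dots> = (\<Sum>y\<in>S. \<Sum>x\<in>S. if p y = x then f y x else 0)" by (rule sum.swap)
  also have "\<dots> = (\<Sum>y\<in>S. if p y \<in> S then f y (p y) else 0)"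
    using fin by (simp add: sum.delta')
  also have "\<dots> = (\<Sum>y\<in>S. f y (p y))"
    by (rule sum.cong) (auto simp: z)
  finally show ?thesis by simp
qed

lemma ineq2: fixes a b q :: real assumes "q > 0" shows "2*a*b \<le> q*a^2 + b^2/q"
proof -
  have "0 \<le> (q*a - b)^2" by simp
  then have "2*q*a*b \<le> q*(q*a^2) + b^2" by (simp add: power2_eq_square algebra_simps)
  have "2*a*b = (2*q*a*b)/q" using assms by simp
  also have "\<dots> \<le> (q*(q*a^2)+b^2)/q" by (rule divide_right_mono) (use \<open>2*q*a*b \<le> _\<close> assms in auto)
  also have "\<dots> = q*a^2 + b^2/q" using assms by (simp add: field_simps power2_eq_square)
  finally show ?thesis .
qed

context jt begin

lemma part1:
  assumes mpos: "\<forall>x. m x > 0"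
    and ineq: "\<forall>x. beta x * m x \<ge> lam x * m (p x) + (\<Sum>y\<in>{y. p y = x}. lam y * m y)"
    and fs: "fin_supp v"
  shows "jform p lam beta v \<ge> 0"
proof -
  define S where "S = {x. v x \<noteq> 0}"
  have finS: "finite S" using fs by (simp add: fin_supp_def S_def)
  define a where "a x = cmod (v x)" for x
  have vout: "v y = 0" if "y \<notin> S" for y using that by (simp add: S_def)
  define g where "g y x = complex_of_real (lam y) * v y * cnj (v x)" for y x
  have A: "jform p lam beta v = (\<Sum>x\<in>S. complex_of_real (lam x) * v (p x) * cnj (v x) + complex_of_real (beta x) * v x * cnj (v x))
      + (\<Sum>x\<in>S. \<Sum>y\<in>{y. p y = x}. g y x)"
    unfolding jform_def jacobi_def S_def[symmetric] g_def
    by (simp add: sum.distrib sum_distrib_right sum_distrib_left algebra_simps)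
  have B1: "(\<Sum>y\<in>{y. p y = x}. g y x) = (\<Sum>y\<in>{y\<in>S. p y = x}. g y x)" for x
    by (rule sum.mono_neutral_right) (auto simp: finN g_def S_def)
  have B: "(\<Sum>x\<in>S. \<Sum>y\<in>{y. p y = x}. g y x) = (\<Sum>y\<in>S. g y (p y))"
  proof -
    have "(\<Sum>y\<in>S. g y (p y)) = (\<Sum>x\<in>S. \<Sum>y\<in>{y\<in>S. p y = x}. g y x)"
      by (rule exch[OF finS]) (simp add: g_def vout)
    then show ?thesis by (simp only: B1)
  qed
  have C1: "complex_of_real (lam x) * v (p x) * cnj (v x) + complex_of_real (beta x) * v x * cnj (v x) + g x (p x)
     = complex_of_real (beta x * (a x)^2 + 2 * lam x * Re (v x * cnj (v (p x))))" for x
    unfolding a_def cmod_power2 by (simp add: g_def complex_eq_iff algebra_simps power2_eq_square)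
  define R where "R = (\<Sum>x\<in>S. beta x * (a x)^2 + 2 * lam x * Re (v x * cnj (v (p x))))"
  have C: "jform p lam beta v = complex_of_real R"
    unfolding A B R_def of_real_sum sum.distrib[symmetric] C1[symmetric] by (simp add: add.assoc)
  have D1: "2 * lam x * Re (v x * cnj (v (p x))) \<ge> - (lam x * (m (p x) / m x) * (a x)^2 + lam x * (m x / m (p x)) * (a (p x))^2)" for x
  proof -
    have "- Re (v x * cnj (v (p x))) \<le> cmod (v x * cnj (v (p x)))" using abs_Re_le_cmod[of "v x * cnj (v (p x))"] by linarith
    also have "\<dots> = a x * a (p x)" by (simp add: a_def norm_mult)
    finally have "- Re (v x * cnj (v (p x))) \<le> a x * a (p x)" .
    moreover have "2 * (a x) * (a (p x)) \<le> (m (p x) / m x) * (a x)^2 + (a (p x))^2 / (m (p x) / m x)"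
      by (rule ineq2) (use mpos in simp)
    moreover have "(a (p x))^2 / (m (p x) / m x) = (m x / m (p x)) * (a (p x))^2" by simp
    ultimately have X: "2 * (- Re (v x * cnj (v (p x)))) \<le> (m (p x) / m x) * (a x)^2 + (m x / m (p x)) * (a (p x))^2"
      by linarith
    have "lam x > 0" using lam_pos by simp
    then have "lam x * (2 * (- Re (v x * cnj (v (p x))))) \<le> lam x * ((m (p x) / m x) * (a x)^2 + (m x / m (p x)) * (a (p x))^2)"
      using X by (intro mult_left_mono) auto
    then show ?thesis by (simp add: algebra_simps)
  qed
  define h where "h y w = lam y * (m y / m w) * (a w)^2" for y w
  have E1: "(\<Sum>x\<in>S. h x (p x)) = (\<Sum>w\<in>S. \<Sum>y\<in>{y\<in>S. p y = w}. h y w)"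
    by (rule exch[OF finS]) (simp add: h_def a_def vout)
  have E2: "(\<Sum>y\<in>{y\<in>S. p y = w}. h y w) \<le> (\<Sum>y\<in>{y. p y = w}. h y w)" for w
  proof (rule sum_mono2[OF finN])
    fix y
    show "0 \<le> h y w" unfolding h_def using lam_pos[rule_format, of y] mpos[rule_format, of y] mpos[rule_format, of w]
      by (intro mult_nonneg_nonneg divide_nonneg_pos) auto
  qed auto
  have E3: "(\<Sum>y\<in>{y. p y = w}. h y w) = (a w)^2 / m w * (\<Sum>y\<in>{y. p y = w}. lam y * m y)" for w
    by (simp add: h_def sum_distrib_left algebra_simps)
  have F: "(\<Sum>x\<in>S. h x (p x)) \<le> (\<Sum>w\<in>S. (a w)^2 / m w * (\<Sum>y\<in>{y. p y = w}. lam y * m y))"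
    unfolding E1 E3[symmetric] by (rule sum_mono) (rule E2)
  have G: "R \<ge> (\<Sum>x\<in>S. beta x * (a x)^2 - lam x * (m (p x) / m x) * (a x)^2) - (\<Sum>x\<in>S. h x (p x))"
    unfolding R_def sum_subtractf[symmetric] h_def
  proof (rule sum_mono)
    fix x show "beta x * (a x)^2 - lam x * (m (p x) / m x) * (a x)^2 - lam x * (m x / m (p x)) * (a (p x))^2
      \<le> beta x * (a x)^2 + 2 * lam x * Re (v x * cnj (v (p x)))" using D1[of x] by linarith
  qed
  have H: "(\<Sum>x\<in>S. beta x * (a x)^2 - lam x * (m (p x) / m x) * (a x)^2) - (\<Sum>w\<in>S. (a w)^2 / m w * (\<Sum>y\<in>{y. p y = w}. lam y * m y))
     = (\<Sum>x\<in>S. (a x)^2 / m x * (beta x * m x - lam x * m (p x) - (\<Sum>y\<in>{y. p y = x}. lam y * m y)))"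
    unfolding sum_subtractf[symmetric]
  proof (rule sum.cong)
    fix x have "m x > 0" using mpos by simp
    then show "beta x * (a x)^2 - lam x * (m (p x) / m x) * (a x)^2 - (a x)^2 / m x * (\<Sum>y\<in>{y. p y = x}. lam y * m y)
      = (a x)^2 / m x * (beta x * m x - lam x * m (p x) - (\<Sum>y\<in>{y. p y = x}. lam y * m y))"
      by (simp add: field_simps)
  qed simp
  have I: "(\<Sum>x\<in>S. (a x)^2 / m x * (beta x * m x - lam x * m (p x) - (\<Sum>y\<in>{y. p y = x}. lam y * m y))) \<ge> 0"
  proof (rule sum_nonneg)
    fix x have "m x > 0" "lam x * m (p x) + (\<Sum>y\<in>{y. p y = x}. lam y * m y) \<le> beta x * m x" using mpos ineq by auto
    then show "(a x)^2 / m x * (beta x * m x - lam x * m (p x) - (\<Sum>y\<in>{y. p y = x}. lam y * m y)) \<ge> 0"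
      by (intro mult_nonneg_nonneg divide_nonneg_pos) auto
  qed
  have "R \<ge> 0" using F G H I by linarith
  then show ?thesis using C by (simp add: less_eq_complex_def)
qed

end

theorem theorem7:
  fixes p :: "'a \<Rightarrow> 'a" and lev :: "'a \<Rightarrow> nat" and lam beta :: "'a \<Rightarrow> real"
  assumes tree: "level_tree p lev"
    and lam_pos: "\<forall>x. lam x > 0"
  shows "((\<exists>m :: 'a \<Rightarrow> real. (\<forall>x. m x > 0) \<and>
            (\<forall>x. beta x * m x \<ge> lam x * m (p x) + (\<Sum>y\<in>{y. p y = x}. lam y * m y)))
          \<longrightarrow> (\<forall>v. fin_supp v \<longrightarrow> jform p lam beta v \<ge> 0))
       \<and> ((\<forall>v. fin_supp v \<longrightarrow> jform p lam beta v \<ge> 0)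
          \<longrightarrow> (\<exists>m :: 'a \<Rightarrow> real. (\<forall>x. m x > 0) \<and>
            (\<forall>x. beta x * m x = lam x * m (p x) + (\<Sum>y\<in>{y. p y = x}. lam y * m y))))"
  proof -
  interpret jt p lev lam beta using tree lam_pos by unfold_locales
  show ?thesis
  proof (intro conjI impI)
    assume "\<exists>m :: 'a \<Rightarrow> real. (\<forall>x. m x > 0) \<and>
            (\<forall>x. beta x * m x \<ge> lam x * m (p x) + (\<Sum>y\<in>{y. p y = x}. lam y * m y))"
    then obtain m where "\<forall>x. m x > 0" "\<forall>x. beta x * m x \<ge> lam x * m (p x) + (\<Sum>y\<in>{y. p y = x}. lam y * m y)" by blast
    then show "\<forall>v. fin_supp v \<longrightarrow> jform p lam beta v \<ge> 0" using part1 by blast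
  next
    assume pos: "\<forall>v. fin_supp v \<longrightarrow> jform p lam beta v \<ge> 0"
    interpret jt_pos p lev lam beta using pos by unfold_locales
    show "\<exists>m :: 'a \<Rightarrow> real. (\<forall>x. m x > 0) \<and>
            (\<forall>x. beta x * m x = lam x * m (p x) + (\<Sum>y\<in>{y. p y = x}. lam y * m y))"
      using m_pos m_eqn by blast
  qed
qed

end
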